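(* Let $\delta:\,]0,+\infty[\to\mathbb R$ be nonnegative, bounded and continuously differentiable, and let $r:\,]\alpha,\omega[\to\,]0,+\infty[$ be a solution of $\ddot r+\delta(r)\dot r=-1/r^2$ which is maximal both to the left and to the right, with energy $h(t)=\frac12\dot r(t)^2-\frac1{r(t)}$. If $\omega<+\infty$ and $h(\omega):=\lim_{t\uparrow\omega}h(t)>-\infty$, then $\lim_{t\uparrow\omega}\dfrac{r(t)}{(\omega-t)^{2/3}}=\sqrt[3]{9/2}$.
   Context: The energy $h$ is nonincreasing along solutions, so the limit $h(\omega)$ exists in $[-\infty,+\infty[$. *)

theory Defs
  imports "HOL-Analysis.Analysis"
begin

definition eint :: "ereal \<Rightarrow> ereal \<Rightarrow> real set" where
  "eint a b = {t. a < ereal t \<and> ereal t < b}"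

definition is_solution :: "(real \<Rightarrow> real) \<Rightarrow> ereal \<Rightarrow> ereal \<Rightarrow> (real \<Rightarrow> real) \<Rightarrow> bool" where
  "is_solution \<delta> a b r \<longleftrightarrow> a < b \<and>
     (\<forall>t\<in>eint a b. r t > 0) \<and>
     (\<exists>v. \<forall>t\<in>eint a b. (r has_real_derivative v t) (at t) \<and>
            (v has_real_derivative (- \<delta> (r t) * v t - 1 / (r t)^2)) (at t))"

definition maximal_solution :: "(real \<Rightarrow> real) \<Rightarrow> ereal \<Rightarrow> ereal \<Rightarrow> (real \<Rightarrow> real) \<Rightarrow> bool" where
  "maximal_solution \<delta> a b r \<longleftrightarrow> is_solution \<delta> a b r \<and>
     (\<forall>a' b' s. a' \<le> a \<and> b \<le> b' \<and> is_solution \<delta> a' b' s \<and>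
        (\<forall>t\<in>eint a b. s t = r t) \<longrightarrow> a' = a \<and> b' = b)"

definition energy :: "(real \<Rightarrow> real) \<Rightarrow> real \<Rightarrow> real" where
  "energy r t = (1/2) * (deriv r t)^2 - 1 / r t"

end

theory Submission
  imports Defs "HOL-Analysis.Analysis"
begin

lemma picard:
  fixes F :: "'a::banach \<Rightarrow> 'a" and y0 :: 'a and t0 :: real
  assumes lip: "L-lipschitz_on (cball y0 b) F" and b: "b > 0"
  shows "\<exists>\<eta>>0. \<exists>\<phi>. \<phi> t0 = y0 \<and> (\<forall>t\<in>{t0..t0+\<eta>}. \<phi> t \<in> cball y0 b \<and>
            (\<phi> has_vector_derivative F (\<phi> t)) (at t within {t0..t0+\<eta>}))"
proof -
  have L0: "0 \<le> L" using lip lipschitz_on_nonneg by blast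
  define M where "M = norm (F y0) + L*b + 1"
  have M0: "M > 0" unfolding M_def using L0 b by (simp add: add_nonneg_pos)
  have Mb: "norm (F p) \<le> M" if "p \<in> cball y0 b" for p
  proof -
    have "norm (F p - F y0) \<le> L * norm (p - y0)"
      using lipschitz_on_normD[OF lip that] b by simp
    also have "\<dots> \<le> L * b" using that L0 by (simp add: dist_norm norm_minus_commute mult_left_mono)
    finally have "norm (F p - F y0) \<le> L * b" .
    then show ?thesis unfolding M_def using norm_triangle_sub[of "F p" "F y0"] by linarith
  qed
  have Fcont: "continuous_on (cball y0 b) F" using lip by (rule lipschitz_on_continuous_on)
  define \<eta> where "\<eta> = min (b/M) (1/(2*L+1))"
  have eta0: "\<eta> > 0" unfolding \<eta>_def using M0 b L0 by simp
  have etaM: "\<eta> * M \<le> b" unfolding \<eta>_def using M0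
    by (metis min.cobounded1 mult.commute mult_left_mono less_imp_le nonzero_mult_div_cancel_left
        order.strict_iff_not times_divide_eq_right)
  have etaL: "\<eta> * L \<le> 1/2"
  proof -
    have "\<eta> * L \<le> (1/(2*L+1)) * L" unfolding \<eta>_def using L0 by (intro mult_right_mono) auto
    also have "\<dots> \<le> 1/2" using L0 by (simp add: field_simps)
    finally show ?thesis .
  qed
  define cl where "cl t = min (max t t0) (t0+\<eta>)" for t
  have cl_in: "cl t \<in> {t0..t0+\<eta>}" for t unfolding cl_def using eta0 by auto
  have cl_id: "t \<in> {t0..t0+\<eta>} \<Longrightarrow> cl t = t" for t unfolding cl_def by auto
  have cl_cont: "continuous_on UNIV cl" unfolding cl_def by (intro continuous_intros)
  define S where "S = (PiC UNIV (\<lambda>_. cball y0 b) :: (real \<Rightarrow>\<^sub>C 'a) set)"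
  have S_iff: "f \<in> S \<longleftrightarrow> (\<forall>t. apply_bcontfun f t \<in> cball y0 b)" for f
    unfolding S_def mem_PiC_iff by auto
  have Scompl: "complete S" unfolding S_def by (simp add: complete_eq_closed closed_PiC)
  have Sne: "S \<noteq> {}"
  proof -
    have "const_bcontfun y0 \<in> S" unfolding S_iff by (simp add: const_bcontfun.rep_eq b less_imp_le)
    then show ?thesis by blast
  qed
  have Ffcont: "continuous_on A (\<lambda>s. F (apply_bcontfun f s))" if "f \<in> S" for f A
    using that unfolding S_iff
    by (intro continuous_on_compose2[OF Fcont]) auto
  define Tg where "Tg f t = y0 + integral {t0..cl t} (\<lambda>s. F (apply_bcontfun f s))" for f t
  have Tg_ball: "Tg f t \<in> cball y0 b" if "f \<in> S" for f t
  proof -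
    have "norm (integral {t0..cl t} (\<lambda>s. F (apply_bcontfun f s))) \<le> M * (cl t - t0)"
      using cl_in[of t] that unfolding S_iff
      by (intro integral_bound Ffcont[OF that] Mb) auto
    also have "\<dots> \<le> M * \<eta>" using cl_in[of t] M0 by (intro mult_left_mono) auto
    finally show ?thesis unfolding Tg_def using etaM by (simp add: dist_norm mult.commute)
  qed
  have Tg_bc: "Tg f \<in> bcontfun" if "f \<in> S" for f
  proof -
    have c1: "continuous_on {t0..t0+\<eta>} (\<lambda>u. integral {t0..u} (\<lambda>s. F (apply_bcontfun f s)))"
      by (intro indefinite_integral_continuous_1 integrable_continuous_real Ffcont[OF that])
    have "continuous_on UNIV (Tg f)" unfolding Tg_def
      by (intro continuous_intros continuous_on_compose2[OF c1 cl_cont]) (use cl_in in auto)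
    moreover have "bounded (range (Tg f))"
      by (rule bounded_subset[OF bounded_cball]) (use Tg_ball[OF that] in auto)
    ultimately show ?thesis unfolding bcontfun_def by auto
  qed
  define T where "T f = Bcontfun (Tg f)" for f
  have applyT: "apply_bcontfun (T f) = Tg f" if "f \<in> S" for f
    unfolding T_def using Tg_bc[OF that] by (simp add: Bcontfun_inverse)
  have TS: "T ` S \<subseteq> S" using applyT Tg_ball S_iff by auto
  have contr: "dist (T f) (T g) \<le> (1/2) * dist f g" if "f \<in> S" "g \<in> S" for f g
  proof (rule dist_bound)
    fix t
    have "dist (T f t) (T g t) = norm (integral {t0..cl t} (\<lambda>s. F (apply_bcontfun f s) - F (apply_bcontfun g s)))"
      unfolding applyT[OF that(1)] applyT[OF that(2)] Tg_def dist_norm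
      by (subst integral_diff) (auto intro!: integrable_continuous_real Ffcont that)
    also have "\<dots> \<le> (L * dist f g) * (cl t - t0)"
    proof (rule integral_bound)
      show "t0 \<le> cl t" using cl_in[of t] by auto
      show "continuous_on {t0..cl t} (\<lambda>s. F (apply_bcontfun f s) - F (apply_bcontfun g s))"
        by (intro continuous_intros Ffcont that)
      fix s
      have "norm (F (apply_bcontfun f s) - F (apply_bcontfun g s)) \<le> L * norm (apply_bcontfun f s - apply_bcontfun g s)"
        using that unfolding S_iff by (intro lipschitz_on_normD[OF lip]) auto
      also have "\<dots> \<le> L * dist f g" using dist_bounded[of f s g] L0
        by (intro mult_left_mono) (auto simp: dist_norm)
      finally show "norm (F (apply_bcontfun f s) - F (apply_bcontfun g s)) \<le> L * dist f g" .
    qed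
    also have "\<dots> \<le> (L * dist f g) * \<eta>" using cl_in[of t] L0
      by (intro mult_left_mono) auto
    also have "\<dots> = (\<eta> * L) * dist f g" by simp
    also have "\<dots> \<le> (1/2) * dist f g" using etaL by (intro mult_right_mono) auto
    finally show "dist (T f t) (T g t) \<le> (1/2) * dist f g" .
  qed
  obtain f where fS: "f \<in> S" and ffix: "T f = f"
    using Banach_fix[OF Scompl Sne _ _ TS contr] by auto
  define \<phi> where "\<phi> = apply_bcontfun f"
  have phiT: "\<phi> t = Tg f t" for t unfolding \<phi>_def by (metis applyT[OF fS] ffix)
  have "\<phi> t0 = y0" unfolding phiT Tg_def using cl_id[of t0] eta0 by simp
  moreover have "\<phi> t \<in> cball y0 b \<and> (\<phi> has_vector_derivative F (\<phi> t)) (at t within {t0..t0+\<eta>})"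
    if t: "t \<in> {t0..t0+\<eta>}" for t
  proof
    show "\<phi> t \<in> cball y0 b" using fS S_iff \<phi>_def by auto
    have d: "((\<lambda>u. integral {t0..u} (\<lambda>s. F (\<phi> s))) has_vector_derivative F (\<phi> t)) (at t within {t0..t0+\<eta>})"
      unfolding \<phi>_def by (rule integral_has_vector_derivative[OF Ffcont[OF fS] t])
    have d2: "((\<lambda>u. y0 + integral {t0..u} (\<lambda>s. F (\<phi> s))) has_vector_derivative F (\<phi> t)) (at t within {t0..t0+\<eta>})"
      using has_vector_derivative_add[OF has_vector_derivative_const d] by simp
    have eq: "\<phi> x = y0 + integral {t0..x} (\<lambda>s. F (\<phi> s))" if x: "x \<in> {t0..t0+\<eta>}" for x
    proof -
      have "\<phi> x = Tg f x" by (rule phiT)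
      also have "\<dots> = y0 + integral {t0..x} (\<lambda>s. F (\<phi> s))"
        unfolding Tg_def cl_id[OF x] \<phi>_def by (rule refl)
      finally show ?thesis .
    qed
    show "(\<phi> has_vector_derivative F (\<phi> t)) (at t within {t0..t0+\<eta>})"
      by (rule has_vector_derivative_transform[OF t _ d2]) (rule eq)
  qed
  ultimately show ?thesis using eta0 by blast
qed


lemma lip_deriv:
  fixes f f' :: "real \<Rightarrow> real"
  assumes d: "\<forall>x\<in>{a..b}. (f has_real_derivative f' x) (at x)"
    and K: "\<forall>x\<in>{a..b}. \<bar>f' x\<bar> \<le> K"
    and x: "x \<in> {a..b}" and y: "y \<in> {a..b}"
  shows "\<bar>f x - f y\<bar> \<le> K * \<bar>x - y\<bar>"
proof -
  have *: "\<bar>f q - f p\<bar> \<le> K * \<bar>q - p\<bar>" if "p \<in> {a..b}" "q \<in> {a..b}" "p < q" for p q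
  proof -
    have "DERIV f x :> f' x" if "p \<le> x" "x \<le> q" for x
      using d that \<open>p \<in> {a..b}\<close> \<open>q \<in> {a..b}\<close> by auto
    then obtain z where z: "p < z" "z < q" "f q - f p = (q - p) * f' z"
      using MVT2[OF \<open>p < q\<close>, of f f'] by blast
    have "z \<in> {a..b}" using z that by auto
    then have "\<bar>f' z\<bar> \<le> K" using K by auto
    then show ?thesis using z \<open>p<q\<close> by (simp add: abs_mult mult.commute mult_left_mono)
  qed
  show ?thesis
  proof (cases x y rule: linorder_cases)
    case less then show ?thesis using *[OF x y] by (simp add: abs_minus_commute)
  next
    case equal then show ?thesis using K x by auto
  next
    case greater then show ?thesis using *[OF y x] by simp
  qed
qed

lemma vd_fst:
  assumes "(\<phi> has_vector_derivative D) F"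
  shows "((\<lambda>t. fst (\<phi> t)) has_real_derivative fst D) F"
proof -
  have "((\<lambda>t. fst (\<phi> t)) has_vector_derivative fst D) F"
    using has_derivative_fst[OF assms[unfolded has_vector_derivative_def]]
    unfolding has_vector_derivative_def by simp
  then show ?thesis by (simp add: has_real_derivative_iff_has_vector_derivative)
qed

lemma vd_snd:
  assumes "(\<phi> has_vector_derivative D) F"
  shows "((\<lambda>t. snd (\<phi> t)) has_real_derivative snd D) F"
proof -
  have "((\<lambda>t. snd (\<phi> t)) has_vector_derivative snd D) F"
    using has_derivative_snd[OF assms[unfolded has_vector_derivative_def]]
    unfolding has_vector_derivative_def by simp
  then show ?thesis by (simp add: has_real_derivative_iff_has_vector_derivative)
qed

lemma glue_deriv:
  fixes f g :: "real \<Rightarrow> real"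
  assumes L: "((\<lambda>y. (f y - c) / (y - x)) \<longlongrightarrow> D) (at_left x)"
    and R: "(g has_real_derivative D) (at x within {x..x+e})" and e: "e > 0" and gx: "g x = c"
  shows "((\<lambda>y. if y < x then f y else g y) has_real_derivative D) (at x)"
proof -
  let ?h = "\<lambda>y. if y < x then f y else g y"
  have hx: "?h x = c" using gx by simp
  have "((\<lambda>y. (?h y - ?h x) / (y - x)) \<longlongrightarrow> D) (at_left x)"
  proof (rule Lim_transform_eventually[OF L])
    show "\<forall>\<^sub>F y in at_left x. (f y - c) / (y - x) = (?h y - ?h x) / (y - x)"
      unfolding hx eventually_at_left_field by (auto intro!: exI[of _ "x - 1"])
  qed
  moreover have "((\<lambda>y. (?h y - ?h x) / (y - x)) \<longlongrightarrow> D) (at_right x)"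
  proof -
    have "((\<lambda>y. (g y - g x) / (y - x)) \<longlongrightarrow> D) (at_right x)"
    proof -
      have "at x within {x..x+e} = at_right x" using e by (intro at_within_Icc_at_right) simp
      then show ?thesis using R unfolding has_field_derivative_iff by simp
    qed
    then show ?thesis
    proof (rule Lim_transform_eventually)
      show "\<forall>\<^sub>F y in at_right x. (g y - g x) / (y - x) = (?h y - ?h x) / (y - x)"
        unfolding hx gx eventually_at_right_field by (auto intro!: exI[of _ "x + 1"])
    qed
  qed
  ultimately have "((\<lambda>y. (?h y - ?h x) / (y - x)) \<longlongrightarrow> D) (at x)"
    unfolding at_eq_sup_left_right by (rule filterlim_sup)
  then show ?thesis unfolding has_field_derivative_iff by simp
qed

lemma decr_deriv:
  fixes f f' :: "real \<Rightarrow> real"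
  assumes "s \<le> t" "\<forall>x\<in>{s..t}. (f has_real_derivative f' x) (at x)" "\<forall>x\<in>{s..t}. f' x \<le> 0"
  shows "f t \<le> f s"
proof (rule DERIV_nonpos_imp_decreasing_open[OF assms(1)])
  show "\<exists>y. (f has_real_derivative y) (at x) \<and> y \<le> 0" if "s < x" "x < t" for x
    using assms that by force
  show "continuous_on {s..t} f"
    using assms(2) by (meson DERIV_isCont continuous_at_imp_continuous_on)
qed

lemma decr_lim:
  fixes u :: "real \<Rightarrow> real"
  assumes ab: "a < b"
    and dec: "\<And>s t. a \<le> s \<Longrightarrow> s \<le> t \<Longrightarrow> t < b \<Longrightarrow> u t \<le> u s"
    and bd: "\<And>t. a \<le> t \<Longrightarrow> t < b \<Longrightarrow> B \<le> u t"
  shows "\<exists>l. (u \<longlongrightarrow> l) (at_left b)"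
proof -
  define l where "l = Inf (u ` {a..<b})"
  have bdd: "bdd_below (u ` {a..<b})" using bd by (auto intro!: bdd_belowI)
  have ne: "u ` {a..<b} \<noteq> {}" using ab by auto
  have lle: "l \<le> u t" if "a \<le> t" "t < b" for t
    unfolding l_def using bdd that by (auto intro!: cInf_lower)
  have "(u \<longlongrightarrow> l) (at_left b)"
  proof (rule order_tendstoI)
    fix y assume yl: "y < l"
    have "eventually (\<lambda>x. x \<in> {a<..<b}) (at_left b)" using eventually_at_left_real[OF ab] .
    then show "\<forall>\<^sub>F x in at_left b. y < u x"
    proof eventually_elim
      case (elim x)
      then have "l \<le> u x" using lle by auto
      then show ?case using yl by linarith
    qed
  next
    fix y assume "l < y"
    then obtain s where s: "s \<in> {a..<b}" "u s < y"
      unfolding l_def using cInf_lessD[OF ne] by blast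
    then have "eventually (\<lambda>x. x \<in> {s<..<b}) (at_left b)" by (intro eventually_at_left_real) auto
    then show "\<forall>\<^sub>F x in at_left b. u x < y"
    proof eventually_elim
      case (elim x)
      then have "u x \<le> u s" using s by (intro dec) auto
      then show ?case using s by linarith
    qed
  qed
  then show ?thesis by blast
qed


lemma absle1: "\<bar>a::real\<bar> \<le> sqrt (a^2 + c^2)" by (rule real_le_rsqrt) simp
lemma absle2: "\<bar>c::real\<bar> \<le> sqrt (a^2 + c^2)" by (rule real_le_rsqrt) simp

lemma F_lip:
  fixes \<delta> \<delta>' :: "real \<Rightarrow> real"
  assumes Dd: "\<forall>x>0. (\<delta> has_real_derivative \<delta>' x) (at x)" and Dc: "continuous_on {0<..} \<delta>'"
    and Dbd: "\<forall>x>0. \<bar>\<delta> x\<bar> \<le> D" and \<rho>: "\<rho> > 0"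
  shows "\<exists>L. L-lipschitz_on (cball (\<rho>,w) (\<rho>/2)) (\<lambda>p. (snd p, - \<delta> (fst p) * snd p - 1 / (fst p)^2))"
proof -
  define I where "I = {\<rho>/2..3*\<rho>/2}"
  have I0: "I \<subseteq> {0<..}" unfolding I_def using \<rho> by auto
  have "compact (\<delta>' ` I)" unfolding I_def
    by (intro compact_continuous_image continuous_on_subset[OF Dc]) (use I0 I_def in auto)
  then obtain Ld0 where Ld0: "\<forall>x\<in>I. \<bar>\<delta>' x\<bar> \<le> Ld0"
    using compact_imp_bounded bounded_real by (metis imageI)
  define Ld where "Ld = max Ld0 0"
  have Ld: "\<forall>x\<in>I. \<bar>\<delta>' x\<bar> \<le> Ld" "Ld \<ge> 0" using Ld0 unfolding Ld_def by force+
  have D0: "D \<ge> 0" using Dbd[rule_format, of 1] by linarith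
  have dlip: "\<bar>\<delta> x - \<delta> y\<bar> \<le> Ld * \<bar>x - y\<bar>" if "x \<in> I" "y \<in> I" for x y
    by (rule lip_deriv[OF _ _ that[unfolded I_def]]) (use Dd I0 Ld in \<open>auto simp: I_def\<close>)
  define C where "C = 16 / \<rho>^3"
  have C0: "C \<ge> 0" unfolding C_def using \<rho> by simp
  have glip: "\<bar>1/x^2 - 1/y^2\<bar> \<le> C * \<bar>x - y\<bar>" if "x \<in> I" "y \<in> I" for x y
  proof (rule lip_deriv[OF _ _ that[unfolded I_def], where f'="\<lambda>x. - 2 / x^3"])
    show "\<forall>x\<in>{\<rho> / 2..3 * \<rho> / 2}. ((\<lambda>x. 1 / x\<^sup>2) has_real_derivative - 2 / x ^ 3) (at x)"
    proof
      fix x assume "x \<in> {\<rho> / 2..3 * \<rho> / 2}"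
      then have x0: "x \<noteq> 0" using \<rho> by auto
      show "((\<lambda>x. 1 / x\<^sup>2) has_real_derivative - 2 / x ^ 3) (at x)"
        by (rule derivative_eq_intros refl | use x0 in \<open>simp add: field_simps power2_eq_square power3_eq_cube\<close>)+
    qed
    show "\<forall>x\<in>{\<rho> / 2..3 * \<rho> / 2}. \<bar>- 2 / x ^ 3\<bar> \<le> C"
    proof
      fix x assume x: "x \<in> {\<rho> / 2..3 * \<rho> / 2}"
      then have x0: "x > 0" using \<rho> by auto
      have "(\<rho>/2)^3 \<le> x^3" using x \<rho> by (intro power_mono) auto
      then have "2 / x^3 \<le> 2 / (\<rho>/2)^3" using \<rho> x0 by (intro divide_left_mono) auto
      also have "\<dots> = C" unfolding C_def by (simp add: power_divide)
      finally show "\<bar>- 2 / x ^ 3\<bar> \<le> C" using x0 by simp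
    qed
  qed
  define Y where "Y = \<bar>w\<bar> + \<rho>/2"
  define L where "L = 1 + D + Ld * Y + C"
  have Y0: "Y \<ge> 0" unfolding Y_def using \<rho> by simp
  have "L-lipschitz_on (cball (\<rho>,w) (\<rho>/2)) (\<lambda>p. (snd p, - \<delta> (fst p) * snd p - 1 / (fst p)^2))"
  proof (rule lipschitz_onI)
    show "0 \<le> L" unfolding L_def using D0 Ld Y0 C0 by simp
    fix p q assume p: "p \<in> cball (\<rho>,w) (\<rho>/2)" and q: "q \<in> cball (\<rho>,w) (\<rho>/2)"
    obtain x1 y1 where p12: "p = (x1, y1)" by (cases p)
    obtain x2 y2 where q12: "q = (x2, y2)" by (cases q)
    have dp: "sqrt ((x1 - \<rho>)^2 + (y1 - w)^2) \<le> \<rho>/2" using p unfolding p12 mem_cball dist_Pair_Pair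
      by (simp add: dist_real_def power2_commute)
    have dq: "sqrt ((x2 - \<rho>)^2 + (y2 - w)^2) \<le> \<rho>/2" using q unfolding q12 mem_cball dist_Pair_Pair
      by (simp add: dist_real_def power2_commute)
    have "\<bar>x1 - \<rho>\<bar> \<le> \<rho>/2" "\<bar>y1 - w\<bar> \<le> \<rho>/2" "\<bar>x2 - \<rho>\<bar> \<le> \<rho>/2" "\<bar>y2 - w\<bar> \<le> \<rho>/2"
      using dp dq absle1 absle2 order_trans by metis+
    then have x1I: "x1 \<in> I" and x2I: "x2 \<in> I" and y1Y: "\<bar>y1\<bar> \<le> Y"
      unfolding I_def Y_def atLeastAtMost_iff by (auto; arith)+
    define dd where "dd = sqrt ((x1 - x2)^2 + (y1 - y2)^2)"
    have dpq: "dist p q = dd" unfolding p12 q12 dist_Pair_Pair dd_def by (simp add: dist_real_def)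
    have ex: "\<bar>x1 - x2\<bar> \<le> dd" and ey: "\<bar>y1 - y2\<bar> \<le> dd"
      unfolding dd_def by (rule absle1 absle2)+
    have dx2: "\<bar>\<delta> x2\<bar> \<le> D" using Dbd x2I I0 by auto
    define b where "b = (- \<delta> x1 * y1 - 1 / x1^2) - (- \<delta> x2 * y2 - 1 / x2^2)"
    have beq: "b = \<delta> x2 * (y2 - y1) + (\<delta> x2 - \<delta> x1) * y1 + (1/x2^2 - 1/x1^2)"
      unfolding b_def by (simp add: algebra_simps)
    have b1: "\<bar>\<delta> x2 * (y2 - y1)\<bar> \<le> D * dd" unfolding abs_mult
      using dx2 ey by (intro mult_mono) auto
    have b2: "\<bar>(\<delta> x2 - \<delta> x1) * y1\<bar> \<le> (Ld * dd) * Y" unfolding abs_mult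
    proof (intro mult_mono)
      show "\<bar>\<delta> x2 - \<delta> x1\<bar> \<le> Ld * dd" using dlip[OF x2I x1I] ex Ld(2)
        by (smt (verit, best) abs_minus_commute mult_left_mono)
    qed (use y1Y Ld(2) ex in auto)
    have b3: "\<bar>1/x2^2 - 1/x1^2\<bar> \<le> C * dd" using glip[OF x2I x1I] ex C0
        by (smt (verit, best) abs_minus_commute mult_left_mono)
    have "\<bar>b\<bar> \<le> D * dd + Ld * dd * Y + C * dd" unfolding beq using b1 b2 b3 by linarith
    have "dist (snd p, - \<delta> (fst p) * snd p - 1 / (fst p)^2) (snd q, - \<delta> (fst q) * snd q - 1 / (fst q)^2)
        = sqrt ((y1 - y2)^2 + b^2)"
      unfolding p12 q12 dist_Pair_Pair b_def by (simp add: dist_real_def)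
    also have "\<dots> \<le> \<bar>y1 - y2\<bar> + \<bar>b\<bar>" by (rule sqrt_sum_squares_le_sum_abs)
    also have "\<dots> \<le> dd + (D * dd + Ld * dd * Y + C * dd)" using ey \<open>\<bar>b\<bar> \<le> _\<close> by linarith
    also have "\<dots> = L * dist p q" unfolding dpq L_def by (simp add: algebra_simps)
    finally show "dist (snd p, - \<delta> (fst p) * snd p - 1 / (fst p)^2) (snd q, - \<delta> (fst q) * snd q - 1 / (fst q)^2) \<le> L * dist p q" .
  qed
  then show ?thesis by blast
qed


lemma ext_contra:
  fixes \<delta> \<delta>' r v :: "real \<Rightarrow> real" and \<alpha> :: ereal and w0 \<rho> w D :: real
  assumes sol: "maximal_solution \<delta> \<alpha> (ereal w0) r"
    and Dd: "\<forall>x>0. (\<delta> has_real_derivative \<delta>' x) (at x)" and Dc: "continuous_on {0<..} \<delta>'"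
    and Dbd: "\<forall>x>0. \<bar>\<delta> x\<bar> \<le> D"
    and vv: "\<forall>t\<in>eint \<alpha> (ereal w0). (r has_real_derivative v t) (at t) \<and>
                (v has_real_derivative (- \<delta> (r t) * v t - 1 / (r t)^2)) (at t)"
    and rl: "(r \<longlongrightarrow> \<rho>) (at_left w0)" and \<rho>: "\<rho> > 0" and vl: "(v \<longlongrightarrow> w) (at_left w0)"
  shows False
proof -
  define F where "F = (\<lambda>p::real\<times>real. (snd p, - \<delta> (fst p) * snd p - 1 / (fst p)^2))"
  obtain L where lip: "L-lipschitz_on (cball (\<rho>,w) (\<rho>/2)) F"
    using F_lip[OF Dd Dc Dbd \<rho>, of w] unfolding F_def by blast
  obtain \<eta> \<phi> where \<eta>: "\<eta> > 0" and \<phi>0: "\<phi> w0 = (\<rho>,w)"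
    and \<phi>d: "\<forall>t\<in>{w0..w0+\<eta>}. \<phi> t \<in> cball (\<rho>,w) (\<rho>/2) \<and>
                (\<phi> has_vector_derivative F (\<phi> t)) (at t within {w0..w0+\<eta>})"
    using picard[OF lip, of w0] \<rho> by auto
  have fstpos: "fst (\<phi> t) > 0" if "t \<in> {w0..w0+\<eta>}" for t
  proof -
    have "dist (fst (\<rho>,w)) (fst (\<phi> t)) \<le> \<rho>/2"
    proof -
      have "dist (\<rho>,w) (\<phi> t) \<le> \<rho>/2" using \<phi>d that by (simp add: mem_cball)
      then show ?thesis using dist_fst_le[of "(\<rho>,w)" "\<phi> t"] by simp
    qed
    then have "\<rho> - fst (\<phi> t) \<le> \<rho>/2" unfolding dist_real_def by (smt (verit) fst_conv)
    then show ?thesis using \<rho> by linarith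
  qed
  have d1: "((\<lambda>t. fst (\<phi> t)) has_real_derivative snd (\<phi> t)) (at t within {w0..w0+\<eta>})"
    if "t \<in> {w0..w0+\<eta>}" for t
    using vd_fst[OF \<phi>d[rule_format, OF that, THEN conjunct2]] by (simp add: F_def)
  have d2: "((\<lambda>t. snd (\<phi> t)) has_real_derivative (- \<delta> (fst (\<phi> t)) * snd (\<phi> t) - 1 / (fst (\<phi> t))^2))
      (at t within {w0..w0+\<eta>})" if "t \<in> {w0..w0+\<eta>}" for t
    using vd_snd[OF \<phi>d[rule_format, OF that, THEN conjunct2]] by (simp add: F_def)
  define s where "s = (\<lambda>t. if t < w0 then r t else fst (\<phi> t))"
  define u where "u = (\<lambda>t. if t < w0 then v t else snd (\<phi> t))"
  have \<alpha>w: "\<alpha> < ereal w0" and rpos: "\<forall>t\<in>eint \<alpha> (ereal w0). r t > 0"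
    using sol unfolding maximal_solution_def is_solution_def by auto
  obtain a0 where a0: "\<alpha> < ereal a0" "a0 < w0" using ereal_dense2[OF \<alpha>w] by auto
  have ev_in: "eventually (\<lambda>t. t \<in> eint \<alpha> (ereal w0)) (at_left w0)"
    using eventually_at_left_real[OF a0(2)]
  proof eventually_elim
    case (elim t)
    then have "\<alpha> < ereal t" using a0(1) by (metis greaterThanLessThan_iff less_ereal.simps(1) order_less_trans)
    then show ?case using elim by (auto simp: eint_def)
  qed
  have ev_lt: "eventually (\<lambda>t. t < w0) (at_left w0)"
    using eventually_at_left_real[OF a0(2)] by eventually_elim auto
  have Ls: "((\<lambda>y. (r y - \<rho>) / (y - w0)) \<longlongrightarrow> w) (at_left w0)"
  proof (rule lhopital_left[where f'=v and g'="\<lambda>_. 1"])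
    show "((\<lambda>y. r y - \<rho>) \<longlongrightarrow> 0) (at_left w0)" using tendsto_diff[OF rl tendsto_const, of \<rho>] by simp
    have "((\<lambda>y. y - w0) \<longlongrightarrow> w0 - w0) (at_left w0)" by (intro tendsto_intros)
    then show "((\<lambda>y. y - w0) \<longlongrightarrow> 0) (at_left w0)" by simp
    show "eventually (\<lambda>y. y - w0 \<noteq> 0) (at_left w0)" using ev_lt by eventually_elim auto
    show "eventually (\<lambda>y. (1::real) \<noteq> 0) (at_left w0)" by simp
    show "eventually (\<lambda>y. DERIV (\<lambda>y. r y - \<rho>) y :> v y) (at_left w0)"
      using ev_in by eventually_elim (use vv in \<open>auto intro!: derivative_eq_intros\<close>)
    show "eventually (\<lambda>y. DERIV (\<lambda>y. y - w0) y :> 1) (at_left w0)"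
      by (intro always_eventually allI) (auto intro!: derivative_eq_intros)
    show "filterlim (\<lambda>y. v y / 1) (nhds w) (at_left w0)" using vl by simp
  qed
  have dcont: "isCont \<delta> \<rho>" using DERIV_isCont Dd \<rho> by blast
  have Lu: "((\<lambda>y. (v y - w) / (y - w0)) \<longlongrightarrow> (- \<delta> \<rho> * w - 1 / \<rho>^2)) (at_left w0)"
  proof (rule lhopital_left[where f'="\<lambda>y. - \<delta> (r y) * v y - 1 / (r y)^2" and g'="\<lambda>_. 1"])
    show "((\<lambda>y. v y - w) \<longlongrightarrow> 0) (at_left w0)" using tendsto_diff[OF vl tendsto_const, of w] by simp
    have "((\<lambda>y. y - w0) \<longlongrightarrow> w0 - w0) (at_left w0)" by (intro tendsto_intros)
    then show "((\<lambda>y. y - w0) \<longlongrightarrow> 0) (at_left w0)" by simp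
    show "eventually (\<lambda>y. y - w0 \<noteq> 0) (at_left w0)" using ev_lt by eventually_elim auto
    show "eventually (\<lambda>y. (1::real) \<noteq> 0) (at_left w0)" by simp
    show "eventually (\<lambda>y. DERIV (\<lambda>y. v y - w) y :> - \<delta> (r y) * v y - 1 / (r y)^2) (at_left w0)"
      using ev_in by eventually_elim (use vv in \<open>auto intro!: derivative_eq_intros\<close>)
    show "eventually (\<lambda>y. DERIV (\<lambda>y. y - w0) y :> 1) (at_left w0)"
      by (intro always_eventually allI) (auto intro!: derivative_eq_intros)
    have "((\<lambda>y. \<delta> (r y)) \<longlongrightarrow> \<delta> \<rho>) (at_left w0)" by (rule isCont_tendsto_compose[OF dcont rl])
    then have "((\<lambda>y. - \<delta> (r y) * v y - 1 / (r y)^2) \<longlongrightarrow> - \<delta> \<rho> * w - 1 / \<rho>^2) (at_left w0)"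
      by (intro tendsto_intros vl rl) (use \<rho> in auto)
    then show "filterlim (\<lambda>y. (- \<delta> (r y) * v y - 1 / (r y)^2) / 1) (nhds (- \<delta> \<rho> * w - 1 / \<rho>^2)) (at_left w0)"
      by simp
  qed
  have sw0: "s w0 = \<rho>" and uw0: "u w0 = w" unfolding s_def u_def using \<phi>0 by auto
  have w0I: "w0 \<in> {w0..w0+\<eta>}" using \<eta> by auto
  have S1: "\<alpha> < ereal (w0+\<eta>)" using \<alpha>w \<eta> by (meson ereal_less_eq(3) less_add_same_cancel1 order.strict_trans2 less_imp_le)
  have S2: "s t > 0" if t: "t \<in> eint \<alpha> (ereal (w0+\<eta>))" for t
    proof (cases "t < w0")
      case True
      then have "t \<in> eint \<alpha> (ereal w0)" using t by (auto simp: eint_def)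
      then show ?thesis using rpos True by (simp add: s_def)
    next
      case False
      then show ?thesis using t fstpos[of t] by (auto simp: s_def eint_def)
    qed
  have S3: "(s has_real_derivative u t) (at t) \<and>
          (u has_real_derivative (- \<delta> (s t) * u t - 1 / (s t)^2)) (at t)"
     if t: "t \<in> eint \<alpha> (ereal (w0+\<eta>))" for t
  proof -
    from t have tlt: "t < w0 + \<eta>" by (auto simp: eint_def)
    consider "t < w0" | "t = w0" | "w0 < t" by linarith
    then show ?thesis
    proof cases
      case 1
      then have tin: "t \<in> eint \<alpha> (ereal w0)" using t by (auto simp: eint_def)
      have st: "s t = r t" "u t = v t" using 1 by (auto simp: s_def u_def)
      show ?thesis unfolding st
      proof
        show "(s has_real_derivative v t) (at t)"
          by (rule has_field_derivative_transform_within_open[of r _ _ "{..<w0}"])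
             (use vv tin 1 in \<open>auto simp: s_def\<close>)
        show "(u has_real_derivative - \<delta> (r t) * v t - 1 / (r t)\<^sup>2) (at t)"
          by (rule has_field_derivative_transform_within_open[of v _ _ "{..<w0}"])
             (use vv tin 1 in \<open>auto simp: u_def\<close>)
      qed
    next
      case 2
      have e1: "s = (\<lambda>y. if y < w0 then r y else fst (\<phi> y))" by (simp add: s_def)
      have e2: "u = (\<lambda>y. if y < w0 then v y else snd (\<phi> y))" by (simp add: u_def)
      have g1: "(s has_real_derivative w) (at w0)"
        unfolding e1 by (rule glue_deriv[OF Ls _ \<eta>]) (use d1[OF w0I] \<phi>0 in auto)
      have g2: "(u has_real_derivative (- \<delta> \<rho> * w - 1 / \<rho>^2)) (at w0)"
        unfolding e2 by (rule glue_deriv[OF Lu _ \<eta>]) (use d2[OF w0I] \<phi>0 in auto)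
      show ?thesis using g1 g2 unfolding 2 sw0 uw0 by simp
    next
      case 3
      have tI: "t \<in> {w0..w0+\<eta>}" using 3 tlt by auto
      have at: "at t within {w0..w0+\<eta>} = at t" using 3 tlt by (intro at_within_Icc_at) auto
      have st: "s t = fst (\<phi> t)" "u t = snd (\<phi> t)" using 3 by (auto simp: s_def u_def)
      show ?thesis unfolding st
      proof
        show "(s has_real_derivative snd (\<phi> t)) (at t)"
          by (rule has_field_derivative_transform_within_open[of "\<lambda>t. fst (\<phi> t)" _ _ "{w0<..}"])
             (use d1[OF tI] at 3 in \<open>auto simp: s_def\<close>)
        show "(u has_real_derivative - \<delta> (fst (\<phi> t)) * snd (\<phi> t) - 1 / (fst (\<phi> t))\<^sup>2) (at t)"
          by (rule has_field_derivative_transform_within_open[of "\<lambda>t. snd (\<phi> t)" _ _ "{w0<..}"])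
             (use d2[OF tI] at 3 in \<open>auto simp: u_def\<close>)
      qed
    qed
  qed
  have sol2: "is_solution \<delta> \<alpha> (ereal (w0+\<eta>)) s"
    unfolding is_solution_def using S1 S2 S3 by blast
  have agree: "\<forall>t\<in>eint \<alpha> (ereal w0). s t = r t" by (auto simp: eint_def s_def)
  have le: "ereal w0 \<le> ereal (w0+\<eta>)" using \<eta> by simp
  have "ereal (w0+\<eta>) = ereal w0"
    using sol sol2 agree le unfolding maximal_solution_def by blast
  then show False using \<eta> by simp
qed



lemma asymp:
  fixes r v :: "real \<Rightarrow> real" and a0 w0 H M :: real
  assumes a0: "a0 < w0"
    and rpos: "\<forall>t\<in>{a0..<w0}. r t > 0"
    and rder: "\<forall>t\<in>{a0..<w0}. (r has_real_derivative v t) (at t)"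
    and vcont: "\<forall>t\<in>{a0..<w0}. isCont v t"
    and hh: "\<forall>t\<in>{a0..<w0}. H \<le> 1/2*(v t)^2 - 1/r t \<and> 1/2*(v t)^2 - 1/r t \<le> M"
    and rlim: "(r \<longlongrightarrow> 0) (at_left w0)"
  shows "((\<lambda>t. r t / (w0 - t) powr (2/3)) \<longlongrightarrow> root 3 (9/2)) (at_left w0)"
proof -
  define c0 where "c0 = 1 / (\<bar>H\<bar> + 1)"
  have c0: "c0 > 0" unfolding c0_def by (simp add: add_pos_nonneg)
  have Z: "r t > c0" if t: "t \<in> {a0..<w0}" and v0: "v t = 0" for t
  proof -
    have rt: "r t > 0" using rpos t by auto
    have "H \<le> - 1 / r t" using hh[rule_format, OF t] v0 by simp
    then have "1 / r t < \<bar>H\<bar> + 1" by linarith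
    then have "1 < (\<bar>H\<bar> + 1) * r t" using rt by (simp add: divide_less_eq)
    then show ?thesis unfolding c0_def using rt by (simp add: divide_less_eq mult.commute)
  qed
  have "eventually (\<lambda>t. r t < c0) (at_left w0)" using order_tendstoD(2)[OF rlim c0] .
  then obtain b where b: "b < w0" "\<forall>t>b. t < w0 \<longrightarrow> r t < c0"
    unfolding eventually_at_left_field by blast
  define b' where "b' = max a0 b"
  have b': "b' < w0" "a0 \<le> b'" using b a0 unfolding b'_def by auto
  have vne: "v t \<noteq> 0" if "t \<in> {b'<..<w0}" for t
    using Z[of t] b that b' unfolding b'_def by force
  have vneg: "v t < 0" if t1: "t \<in> {b'<..<w0}" for t
  proof (rule ccontr)
    assume "\<not> v t < 0"
    then have vt: "v t > 0" using vne[OF t1] by linarith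
    have pos: "v s > 0" if s: "s \<in> {t..<w0}" for s
    proof (rule ccontr)
      assume "\<not> v s > 0"
      then have "v s \<le> 0" by linarith
      moreover have "t \<le> s" using s by auto
      moreover have "continuous_on {t..s} v"
        using vcont t1 s b' by (intro continuous_at_imp_continuous_on) auto
      ultimately obtain x where x: "t \<le> x" "x \<le> s" "v x = 0"
        using IVT2'[of v s 0 t] vt by auto
      then have "x \<in> {b'<..<w0}" using t1 s by auto
      then show False using vne x by auto
    qed
    have incr: "r t \<le> r s" if s: "s \<in> {t..<w0}" for s
    proof (rule DERIV_nonneg_imp_increasing_open[of t s r])
      show "t \<le> s" using s by auto
      show "\<exists>y. (r has_real_derivative y) (at x) \<and> 0 \<le> y" if "t < x" "x < s" for x
      proof (intro exI[of _ "v x"] conjI)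
        have "x \<in> {a0..<w0}" "x \<in> {t..<w0}" using that s t1 b' by auto
        then show "(r has_real_derivative v x) (at x)" "0 \<le> v x" using rder pos[of x] by auto
      qed
      show "continuous_on {t..s} r"
        using rder t1 s b' by (intro continuous_at_imp_continuous_on) (auto intro: DERIV_isCont)
    qed
    have "eventually (\<lambda>s. r t \<le> r s) (at_left w0)"
      using eventually_at_left_real[of t w0] t1 incr by (auto elim!: eventually_mono)
    then have "r t \<le> 0" using tendsto_lowerbound[OF rlim] by auto
    moreover have "t \<in> {a0..<w0}" using t1 b' by auto
    ultimately show False using rpos by fastforce
  qed
  have evI: "eventually (\<lambda>t. t \<in> {b'<..<w0}) (at_left w0)"
    using eventually_at_left_real[OF b'(1)] .
  have inI: "t \<in> {a0..<w0}" if "t \<in> {b'<..<w0}" for t using that b' by auto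
  define hf where "hf t = 1/2*(v t)^2 - 1/r t" for t
  define B where "B = \<bar>H\<bar> + \<bar>M\<bar>"
  have rh0: "((\<lambda>t. r t * hf t) \<longlongrightarrow> 0) (at_left w0)"
  proof (rule Lim_null_comparison)
    show "eventually (\<lambda>t. norm (r t * hf t) \<le> r t * B) (at_left w0)"
      using evI
    proof eventually_elim
      case (elim t)
      have "H \<le> hf t" "hf t \<le> M" using hh inI[OF elim] unfolding hf_def by auto
      then have "\<bar>hf t\<bar> \<le> B" unfolding B_def abs_le_iff
        using abs_ge_self[of H] abs_ge_minus_self[of H] abs_ge_self[of M] abs_ge_minus_self[of M] by linarith
      moreover have "r t > 0" using rpos inI[OF elim] by auto
      ultimately show ?case by (simp add: abs_mult mult_left_mono)
    qed
    show "((\<lambda>t. r t * B) \<longlongrightarrow> 0) (at_left w0)" using tendsto_mult[OF rlim tendsto_const, of B] by simp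
  qed
  have q: "((\<lambda>t. r t * (v t)^2) \<longlongrightarrow> 2) (at_left w0)"
  proof -
    have "((\<lambda>t. 2 * (r t * hf t) + 2) \<longlongrightarrow> 2 * 0 + 2) (at_left w0)"
      by (intro tendsto_intros rh0)
    then have "((\<lambda>t. 2 * (r t * hf t) + 2) \<longlongrightarrow> 2) (at_left w0)" by simp
    then show ?thesis
    proof (rule Lim_transform_eventually)
      show "eventually (\<lambda>t. 2 * (r t * hf t) + 2 = r t * (v t)^2) (at_left w0)"
        using evI
      proof eventually_elim
        case (elim t)
        then have "r t > 0" using rpos inI by auto
        then show ?case unfolding hf_def by (simp add: field_simps)
      qed
    qed
  qed
  have sv: "((\<lambda>t. sqrt (r t) * v t) \<longlongrightarrow> - sqrt 2) (at_left w0)"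
  proof -
    have "((\<lambda>t. - sqrt (r t * (v t)^2)) \<longlongrightarrow> - sqrt 2) (at_left w0)"
      by (intro tendsto_intros q)
    then show ?thesis
    proof (rule Lim_transform_eventually)
      show "eventually (\<lambda>t. - sqrt (r t * (v t)^2) = sqrt (r t) * v t) (at_left w0)"
        using evI
      proof eventually_elim
        case (elim t)
        then have "v t < 0" using vneg by auto
        then show ?case by (simp add: real_sqrt_mult)
      qed
    qed
  qed
  define f where "f t = r t * sqrt (r t)" for t
  have fd: "(f has_real_derivative (3/2) * (sqrt (r t) * v t)) (at t)" if t: "t \<in> {b'<..<w0}" for t
  proof -
    have rt: "r t > 0" using rpos inI[OF t] by auto
    have D1: "(f has_real_derivative v t * sqrt (r t) + r t * (inverse (sqrt (r t)) / 2 * v t)) (at t)"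
      unfolding f_def using rder inI[OF t] rt
      by (auto intro!: derivative_eq_intros)
    have E1: "v t * sqrt (r t) + r t * (inverse (sqrt (r t)) / 2 * v t) = (3/2) * (sqrt (r t) * v t)"
    proof -
      have "r t * inverse (sqrt (r t)) = sqrt (r t)" using real_div_sqrt[of "r t"] rt
        by (simp add: divide_inverse)
      then have "r t * (inverse (sqrt (r t)) / 2 * v t) = sqrt (r t) * v t / 2"
        by (metis (no_types, lifting) mult.assoc mult.commute times_divide_eq_left)
      then show ?thesis by simp
    qed
    show ?thesis using D1 unfolding E1 .
  qed
  have f0: "(f \<longlongrightarrow> 0) (at_left w0)"
  proof -
    have "((\<lambda>t. r t * sqrt (r t)) \<longlongrightarrow> 0 * sqrt 0) (at_left w0)" by (intro tendsto_intros rlim)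
    then show ?thesis unfolding f_def by simp
  qed
  have lh: "((\<lambda>t. f t / (t - w0)) \<longlongrightarrow> (3/2) * (- sqrt 2)) (at_left w0)"
  proof (rule lhopital_left[where f'="\<lambda>t. (3/2) * (sqrt (r t) * v t)" and g'="\<lambda>_. 1"])
    show "(f \<longlongrightarrow> 0) (at_left w0)" by (rule f0)
    have "((\<lambda>y. y - w0) \<longlongrightarrow> w0 - w0) (at_left w0)" by (intro tendsto_intros)
    then show "((\<lambda>y. y - w0) \<longlongrightarrow> 0) (at_left w0)" by simp
    show "eventually (\<lambda>y. y - w0 \<noteq> 0) (at_left w0)" using evI by eventually_elim auto
    show "eventually (\<lambda>y. (1::real) \<noteq> 0) (at_left w0)" by simp
    show "eventually (\<lambda>y. DERIV f y :> (3/2) * (sqrt (r y) * v y)) (at_left w0)"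
      using evI by eventually_elim (rule fd)
    show "eventually (\<lambda>y. DERIV (\<lambda>y. y - w0) y :> 1) (at_left w0)"
      by (intro always_eventually allI) (auto intro!: derivative_eq_intros)
    have "((\<lambda>t. (3/2) * (sqrt (r t) * v t)) \<longlongrightarrow> (3/2) * (- sqrt 2)) (at_left w0)"
      by (intro tendsto_intros sv)
    then show "filterlim (\<lambda>t. (3/2) * (sqrt (r t) * v t) / 1) (nhds ((3/2) * (- sqrt 2))) (at_left w0)"
      by simp
  qed
  define K where "K = (3/2) * sqrt (2::real)"
  have K0: "K > 0" unfolding K_def by simp
  have lh2: "((\<lambda>t. f t / (w0 - t)) \<longlongrightarrow> K) (at_left w0)"
  proof -
    have "((\<lambda>t. - (f t / (t - w0))) \<longlongrightarrow> - ((3/2) * (- sqrt 2))) (at_left w0)"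
      by (intro tendsto_intros lh)
    moreover have "- ((3/2) * (- sqrt 2)) = K" unfolding K_def by simp
    moreover have "f t / (w0 - t) = - (f t / (t - w0))" for t
      by (metis divide_minus_right minus_diff_eq)
    ultimately show ?thesis by simp
  qed
  have fin: "((\<lambda>t. (f t / (w0 - t)) powr (2/3)) \<longlongrightarrow> K powr (2/3)) (at_left w0)"
    by (rule tendsto_powr[OF lh2 tendsto_const]) (use K0 in simp)
  have Kval: "K powr (2/3) = root 3 (9/2)"
  proof -
    have "K^2 = (3/2)^2 * (sqrt 2)^2" unfolding K_def by (simp only: power_mult_distrib)
    then have "K^2 = 9/2" by (simp add: power2_eq_square)
    then have "K powr 2 = 9/2" using K0 by (simp add: powr_realpow)
    have "root 3 (9/2) = (9/2) powr (1/3)" by (simp add: root_powr_inverse)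
    also have "\<dots> = (K powr 2) powr (1/3)" unfolding \<open>K powr 2 = 9/2\<close> ..
    also have "\<dots> = K powr (2/3)" by (simp add: powr_powr)
    finally show ?thesis by simp
  qed
  show ?thesis unfolding Kval[symmetric]
  proof (rule Lim_transform_eventually[OF fin])
    show "eventually (\<lambda>t. (f t / (w0 - t)) powr (2/3) = r t / (w0 - t) powr (2/3)) (at_left w0)"
      using evI
    proof eventually_elim
      case (elim t)
      then have rt: "r t > 0" using rpos inI by auto
      have "f t = r t powr (3/2)"
      proof -
        have "r t powr (3/2) = r t powr (1 + 1/2)" by simp
        also have "\<dots> = r t powr 1 * r t powr (1/2)" by (rule powr_add)
        also have "\<dots> = r t * sqrt (r t)" using rt by (simp add: powr_half_sqrt)
        finally show ?thesis unfolding f_def by simp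
      qed
      then have "(f t / (w0 - t)) powr (2/3) = (r t powr (3/2)) powr (2/3) / (w0 - t) powr (2/3)"
        by (simp add: powr_divide)
      also have "\<dots> = r t / (w0 - t) powr (2/3)" using rt by (simp add: powr_powr powr_one)
      finally show ?case .
    qed
  qed
qed


lemma abs_le_1_sq: "\<bar>x::real\<bar> \<le> 1 + x^2"
proof (cases "\<bar>x\<bar> \<le> 1")
  case True then show ?thesis using zero_le_power2[of x] by linarith
next
  case False
  then have "\<bar>x\<bar> * 1 \<le> \<bar>x\<bar> * \<bar>x\<bar>" by (intro mult_left_mono) auto
  then have "\<bar>x\<bar> \<le> x^2" by (simp add: power2_eq_square abs_mult_self_eq)
  then show ?thesis by linarith
qed

theorem corollary8p2:
  fixes \<delta> r :: "real \<Rightarrow> real" and \<alpha> \<omega> :: ereal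
  assumes nonneg: "\<forall>x>0. \<delta> x \<ge> 0"
    and bdd: "bounded (\<delta> ` {0<..})"
    and C1: "\<exists>\<delta>'. continuous_on {0<..} \<delta>' \<and> (\<forall>x>0. (\<delta> has_real_derivative \<delta>' x) (at x))"
    and sol: "maximal_solution \<delta> \<alpha> \<omega> r"
    and fin: "\<omega> < \<infinity>"
    and hlim: "\<exists>L. ((\<lambda>t. ereal (energy r t)) \<longlongrightarrow> L) (at_left (real_of_ereal \<omega>)) \<and> L > -\<infinity>"
  shows "((\<lambda>t. r t / (real_of_ereal \<omega> - t) powr (2/3)) \<longlongrightarrow> root 3 (9/2))
           (at_left (real_of_ereal \<omega>))"
proof -
  have isol: "is_solution \<delta> \<alpha> \<omega> r" using sol unfolding maximal_solution_def by auto
  then have \<alpha>\<omega>: "\<alpha> < \<omega>" and rpos0: "\<forall>t\<in>eint \<alpha> \<omega>. r t > 0" unfolding is_solution_def by auto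
  obtain v where vv: "\<forall>t\<in>eint \<alpha> \<omega>. (r has_real_derivative v t) (at t) \<and>
            (v has_real_derivative (- \<delta> (r t) * v t - 1 / (r t)^2)) (at t)"
    using isol unfolding is_solution_def by blast
  obtain w0 where \<omega>: "\<omega> = ereal w0" using fin \<alpha>\<omega> by (cases \<omega>) auto
  obtain \<delta>' where Dc: "continuous_on {0<..} \<delta>'" and Dd: "\<forall>x>0. (\<delta> has_real_derivative \<delta>' x) (at x)"
    using C1 by blast
  obtain D where Dbd: "\<forall>x>0. \<bar>\<delta> x\<bar> \<le> D" using bdd unfolding bounded_real by auto
  obtain a0 where a0: "\<alpha> < ereal a0" "a0 < w0" using ereal_dense2[OF \<alpha>\<omega>[unfolded \<omega>]] by auto
  have inE: "t \<in> eint \<alpha> \<omega>" if "a0 \<le> t" "t < w0" for t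
  proof -
    have "\<alpha> < ereal t" using a0(1) that(1) by (meson ereal_less_eq(3) order_less_le_trans)
    then show ?thesis using that unfolding eint_def \<omega> by auto
  qed
  have rpos: "r t > 0" if "a0 \<le> t" "t < w0" for t using rpos0 inE[OF that] by auto
  have rder: "(r has_real_derivative v t) (at t)" if "a0 \<le> t" "t < w0" for t using vv inE[OF that] by auto
  have vder: "(v has_real_derivative (- \<delta> (r t) * v t - 1 / (r t)^2)) (at t)" if "a0 \<le> t" "t < w0" for t
    using vv inE[OF that] by auto
  define hh where "hh t = 1/2*(v t)^2 - 1/r t" for t
  have en: "energy r t = hh t" if "a0 \<le> t" "t < w0" for t
    unfolding energy_def hh_def using DERIV_imp_deriv[OF rder[OF that]] by simp
  have hder: "(hh has_real_derivative (- \<delta> (r t) * (v t)^2)) (at t)" if t: "a0 \<le> t" "t < w0" for t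
  proof -
    have rt: "r t \<noteq> 0" using rpos[OF t] by auto
    show ?thesis unfolding hh_def
      using rder[OF t] vder[OF t] rt
      by (auto intro!: derivative_eq_intros simp: field_simps power2_eq_square)
  qed
  have hmono: "hh t \<le> hh s" if "a0 \<le> s" "s \<le> t" "t < w0" for s t
  proof (rule decr_deriv[where f'="\<lambda>t. - \<delta> (r t) * (v t)^2" and f=hh and s=s and t=t])
    show "s \<le> t" by fact
    show "\<forall>x\<in>{s..t}. (hh has_real_derivative - \<delta> (r x) * (v x)\<^sup>2) (at x)"
      using hder that by auto
    show "\<forall>x\<in>{s..t}. - \<delta> (r x) * (v x)\<^sup>2 \<le> 0"
    proof
      fix x assume "x \<in> {s..t}"
      then have "\<delta> (r x) \<ge> 0" using nonneg rpos that by auto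
      then show "- \<delta> (r x) * (v x)\<^sup>2 \<le> 0" by simp
    qed
  qed
  obtain L where Ll: "((\<lambda>t. ereal (energy r t)) \<longlongrightarrow> L) (at_left w0)" and Lgt: "L > -\<infinity>"
    using hlim unfolding \<omega> by auto
  have Lle: "L \<le> ereal (hh t)" if t: "a0 \<le> t" "t < w0" for t
  proof (rule tendsto_upperbound[OF Ll])
    show "\<forall>\<^sub>F s in at_left w0. ereal (energy r s) \<le> ereal (hh t)"
      using eventually_at_left_real[OF t(2)]
    proof eventually_elim
      case (elim s)
      then show ?case using en[of s] hmono[of t s] t by auto
    qed
  qed simp
  obtain H where LH: "L = ereal H" using Lgt Lle[of a0] a0 by (cases L) auto
  have Hle: "H \<le> hh t" if "a0 \<le> t" "t < w0" for t using Lle[OF that] LH by simp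
  define M where "M = hh a0"
  have leM: "hh t \<le> M" if "a0 \<le> t" "t < w0" for t using hmono[of a0 t] that unfolding M_def by auto
  define c0 where "c0 = 1 / (\<bar>H\<bar> + 1)"
  have c0: "c0 > 0" unfolding c0_def by (simp add: add_pos_nonneg)
  have Z: "r t > c0" if t: "a0 \<le> t" "t < w0" and v0: "v t = 0" for t
  proof -
    have rt: "r t > 0" using rpos[OF t] .
    have "H \<le> - 1 / r t" using Hle[OF t] v0 unfolding hh_def by simp
    then have "1 / r t < \<bar>H\<bar> + 1" by linarith
    then have "1 < (\<bar>H\<bar> + 1) * r t" using rt by (simp add: divide_less_eq)
    then show ?thesis unfolding c0_def using rt by (simp add: divide_less_eq mult.commute)
  qed
  have rlim: "(r \<longlongrightarrow> 0) (at_left w0)"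
  proof (rule ccontr)
    assume nl: "\<not> (r \<longlongrightarrow> 0) (at_left w0)"
    then obtain \<epsilon> where \<epsilon>: "\<epsilon> > 0" and ne: "\<not> eventually (\<lambda>t. dist (r t) 0 < \<epsilon>) (at_left w0)"
      unfolding tendsto_iff by auto
    have freq: "\<exists>t. b < t \<and> t < w0 \<and> \<epsilon> \<le> r t" if "a0 \<le> b" "b < w0" for b
    proof (rule ccontr)
      assume "\<not> ?thesis"
      then have lt: "\<forall>y>b. y < w0 \<longrightarrow> r y < \<epsilon>" by (auto simp: not_le)
      have "\<forall>y>b. y < w0 \<longrightarrow> dist (r y) 0 < \<epsilon>"
      proof (intro allI impI)
        fix y assume y: "b < y" "y < w0"
        then have "r y > 0" using rpos that by auto
        then show "dist (r y) 0 < \<epsilon>" using lt y by (simp add: dist_real_def)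
      qed
      then have "eventually (\<lambda>t. dist (r t) 0 < \<epsilon>) (at_left w0)"
        unfolding eventually_at_left_field using that by blast
      then show False using ne by simp
    qed
    define c where "c = min \<epsilon> c0 / 2"
    have c: "c > 0" "c < \<epsilon>" "c < c0" unfolding c_def using \<epsilon> c0 by auto
    obtain t1 where t1: "a0 < t1" "t1 < w0" "\<epsilon> \<le> r t1" using freq[of a0] a0 by auto
    have lower: "c \<le> r t" if t: "t1 \<le> t" "t < w0" for t
    proof (rule ccontr)
      assume "\<not> c \<le> r t"
      then have t2: "r t < c" by simp
      obtain t3 where t3: "t < t3" "t3 < w0" "\<epsilon> \<le> r t3" using freq[of t] t t1 by auto
      have cont: "continuous_on {t1..t3} r"
      proof (intro continuous_at_imp_continuous_on ballI)
        fix x assume "x \<in> {t1..t3}"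
        then have "a0 \<le> x" "x < w0" using t1 t3 by auto
        then show "isCont r x" using rder DERIV_isCont by blast
      qed
      obtain \<tau> where \<tau>: "\<tau> \<in> {t1..t3}" "\<forall>y\<in>{t1..t3}. r \<tau> \<le> r y"
        using continuous_attains_inf[OF compact_Icc _ cont] t t3 by auto
      have "r \<tau> \<le> r t" using \<tau> t t3 by auto
      then have rt: "r \<tau> < c" using t2 by linarith
      have "\<tau> \<noteq> t1" "\<tau> \<noteq> t3" using rt c t1 t3 by auto
      then have tau: "t1 < \<tau>" "\<tau> < t3" using \<tau>(1) by auto
      have "v \<tau> = 0"
      proof (rule DERIV_local_min[OF rder])
        show "a0 \<le> \<tau>" "\<tau> < w0" using tau t1 t3 by auto
        show "0 < min (\<tau> - t1) (t3 - \<tau>)" using tau by auto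
        show "\<forall>y. \<bar>\<tau> - y\<bar> < min (\<tau> - t1) (t3 - \<tau>) \<longrightarrow> r \<tau> \<le> r y"
          using \<tau>(2) by (auto simp: abs_less_iff)
      qed
      then have "r \<tau> > c0" using Z tau t1 t3 by auto
      then show False using rt c by linarith
    qed
    define V where "V = 1 + 2 * \<bar>M\<bar> + 2 / c"
    have V0: "V \<ge> 0" unfolding V_def using c by simp
    have vbd: "\<bar>v t\<bar> \<le> V" if t: "t1 \<le> t" "t < w0" for t
    proof -
      have t': "a0 \<le> t" using t t1 by auto
      have "1 / r t \<le> 1 / c" using lower[OF t] c by (intro divide_left_mono) auto
      then have "(v t)^2 \<le> 2 * \<bar>M\<bar> + 2 / c" using leM[OF t' t(2)] unfolding hh_def by simp
      then show ?thesis using abs_le_1_sq[of "v t"] unfolding V_def by linarith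
    qed
    define K2 where "K2 = D * V + 1 / c^2"
    have D0: "D \<ge> 0" using Dbd[rule_format, of 1] by linarith
    have K20: "K2 \<ge> 0" unfolding K2_def using D0 V0 by simp
    have vdbd: "\<bar>- \<delta> (r t) * v t - 1 / (r t)^2\<bar> \<le> K2" if t: "t1 \<le> t" "t < w0" for t
    proof -
      have t': "a0 \<le> t" using t t1 by auto
      have rt: "r t \<ge> c" using lower[OF t] .
      have "\<bar>\<delta> (r t) * v t\<bar> \<le> D * V" unfolding abs_mult
        using Dbd rpos[OF t' t(2)] vbd[OF t] by (intro mult_mono) auto
      moreover have "1 / (r t)^2 \<le> 1 / c^2" using rt c by (intro divide_left_mono power_mono) auto
      moreover have "1 / (r t)^2 \<ge> 0" by simp
      ultimately show ?thesis unfolding K2_def by linarith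
    qed
    have l1: "\<exists>l. ((\<lambda>t. r t - V * t) \<longlongrightarrow> l) (at_left w0)"
    proof (rule decr_lim[OF t1(2)])
      fix s t assume st: "t1 \<le> s" "s \<le> t" "t < w0"
      show "r t - V * t \<le> r s - V * s"
      proof (rule decr_deriv[where f'="\<lambda>x. v x - V" and f="\<lambda>t. r t - V * t" and s=s and t=t])
        show "s \<le> t" by fact
        show "\<forall>x\<in>{s..t}. ((\<lambda>t. r t - V * t) has_real_derivative v x - V) (at x)"
          using rder st t1 by (auto intro!: derivative_eq_intros)
        show "\<forall>x\<in>{s..t}. v x - V \<le> 0"
        proof
          fix x assume "x \<in> {s..t}"
          then have "\<bar>v x\<bar> \<le> V" using vbd st by auto
          then show "v x - V \<le> 0" by linarith
        qed
      qed
    next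
      fix t assume t: "t1 \<le> t" "t < w0"
      have "V * t \<le> V * w0" using t V0 by (intro mult_left_mono) auto
      moreover have "r t > 0" using rpos t t1 by auto
      ultimately show "- V * w0 \<le> r t - V * t" by linarith
    qed
    then obtain l1 where l1: "((\<lambda>t. r t - V * t) \<longlongrightarrow> l1) (at_left w0)" by blast
    have l2: "\<exists>l. ((\<lambda>t. v t - K2 * t) \<longlongrightarrow> l) (at_left w0)"
    proof (rule decr_lim[OF t1(2)])
      fix s t assume st: "t1 \<le> s" "s \<le> t" "t < w0"
      show "v t - K2 * t \<le> v s - K2 * s"
      proof (rule decr_deriv[where f'="\<lambda>x. (- \<delta> (r x) * v x - 1 / (r x)^2) - K2" and f="\<lambda>t. v t - K2 * t" and s=s and t=t])
        show "s \<le> t" by fact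
        show "\<forall>x\<in>{s..t}. ((\<lambda>t. v t - K2 * t) has_real_derivative (- \<delta> (r x) * v x - 1 / (r x)^2) - K2) (at x)"
          using vder st t1 by (auto intro!: derivative_eq_intros)
        show "\<forall>x\<in>{s..t}. (- \<delta> (r x) * v x - 1 / (r x)^2) - K2 \<le> 0"
        proof
          fix x assume "x \<in> {s..t}"
          then have "\<bar>- \<delta> (r x) * v x - 1 / (r x)^2\<bar> \<le> K2" using vdbd st by auto
          then show "(- \<delta> (r x) * v x - 1 / (r x)^2) - K2 \<le> 0" by linarith
        qed
      qed
    next
      fix t assume t: "t1 \<le> t" "t < w0"
      have "K2 * t \<le> K2 * w0" using t K20 by (intro mult_left_mono) auto
      moreover have "\<bar>v t\<bar> \<le> V" using vbd t by auto
      ultimately show "- V - K2 * w0 \<le> v t - K2 * t" by linarith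
    qed
    then obtain l2 where l2: "((\<lambda>t. v t - K2 * t) \<longlongrightarrow> l2) (at_left w0)" by blast
    have rl: "(r \<longlongrightarrow> l1 + V * w0) (at_left w0)"
    proof -
      have "((\<lambda>t. (r t - V * t) + V * t) \<longlongrightarrow> l1 + V * w0) (at_left w0)"
        by (intro tendsto_intros l1)
      then show ?thesis by simp
    qed
    have vl: "(v \<longlongrightarrow> l2 + K2 * w0) (at_left w0)"
    proof -
      have "((\<lambda>t. (v t - K2 * t) + K2 * t) \<longlongrightarrow> l2 + K2 * w0) (at_left w0)"
        by (intro tendsto_intros l2)
      then show ?thesis by simp
    qed
    have "c \<le> l1 + V * w0"
    proof (rule tendsto_lowerbound[OF rl])
      show "\<forall>\<^sub>F t in at_left w0. c \<le> r t"
        using eventually_at_left_real[OF t1(2)] by eventually_elim (use lower in auto)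
    qed simp
    then have \<rho>: "l1 + V * w0 > 0" using c by linarith
    show False
      using ext_contra[OF sol[unfolded \<omega>] Dd Dc Dbd vv[unfolded \<omega>] rl \<rho> vl] .
  qed
  have main: "((\<lambda>t. r t / (w0 - t) powr (2/3)) \<longlongrightarrow> root 3 (9/2)) (at_left w0)"
  proof (rule asymp[OF a0(2) _ _ _ _ rlim, where H=H and M=M and v=v])
    show "\<forall>t\<in>{a0..<w0}. 0 < r t" using rpos by auto
    show "\<forall>t\<in>{a0..<w0}. (r has_real_derivative v t) (at t)" using rder by auto
    show "\<forall>t\<in>{a0..<w0}. isCont v t"
    proof
      fix t assume "t \<in> {a0..<w0}"
      then have "a0 \<le> t" "t < w0" by auto
      then show "isCont v t" using vder DERIV_isCont by blast
    qed
    show "\<forall>t\<in>{a0..<w0}. H \<le> 1/2*(v t)^2 - 1/r t \<and> 1/2*(v t)^2 - 1/r t \<le> M"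
      using Hle leM unfolding hh_def by auto
  qed
  then show ?thesis unfolding \<omega> by simp
qed

end
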